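(* In the setting described in the context, let $\Xi\subset\mathbb{R}^L$ be $\mathrm{conv}(g(\mathcal{X}))$-maximal. Suppose there exists a feature map $\mathcal{A}:\mathcal{X}\to\mathbb{R}^L$ such that $\mathcal{A}(X)\in\mathcal{P}_\Xi(g(X))$ and $a=E[g(X)\mid\mathcal{A}(X)=a]$ for $\gamma$-almost every $(a,X)$, where $\gamma$ is the law of $(\mathcal{A}(X),X)$ with $X\sim p$. Then $\mathcal{A}$ is an optimal autoencoder.
   Context: Let $\mathcal{X}\subset\mathbb{R}^L$ be Borel, $p$ a probability measure on $\mathcal{X}$ with a Lebesgue density, $g:\mathcal{X}\to\mathbb{R}^L$ Borel and $W:\mathbb{R}^L\to\mathbb{R}$ of class $C^3$. An autoencoder is a Borel probability measure $\gamma$ on $\mathbb{R}^L\times\mathcal{X}$ with $\mathcal{X}$-marginal $p$ and $E_\gamma[g(X)\mid a]=a$ for $\gamma$-a.e. $a$; it is optimal if it maximizes $E_\gamma[W(a)]$ over all autoencoders. Define $c(a,b)=W(b)-W(a)+DW(a)(a-b)$ and $\mathcal{P}_\Xi(b)=\arg\min_{a\in\Xi}c(a,b)$. $\Xi$ is $Y$-maximal if $\inf_{a\in\Xi}c(a,b)\le0$ for all $b\in Y$. $\mathrm{conv}$ denotes convex hull. *)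

theory Defs
  imports "HOL-Analysis.Analysis" "HOL-Probability.Probability"
begin

definition C3 :: "('a::euclidean_space \<Rightarrow> real) \<Rightarrow> bool" where
  "C3 W \<longleftrightarrow> (\<exists>(D1 :: 'a \<Rightarrow> ('a \<Rightarrow>\<^sub>L real)) (D2 :: 'a \<Rightarrow> ('a \<Rightarrow>\<^sub>L ('a \<Rightarrow>\<^sub>L real)))
      (D3 :: 'a \<Rightarrow> ('a \<Rightarrow>\<^sub>L ('a \<Rightarrow>\<^sub>L ('a \<Rightarrow>\<^sub>L real)))).
      (\<forall>x. (W has_derivative blinfun_apply (D1 x)) (at x)) \<and>
      (\<forall>x. (D1 has_derivative blinfun_apply (D2 x)) (at x)) \<and>
      (\<forall>x. (D2 has_derivative blinfun_apply (D3 x)) (at x)) \<and>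
      continuous_on UNIV D3)"

definition cost :: "('a::euclidean_space \<Rightarrow> real) \<Rightarrow> 'a \<Rightarrow> 'a \<Rightarrow> real" where
  "cost W a b = W b - W a + frechet_derivative W (at a) (a - b)"

definition proj_set :: "('a::euclidean_space \<Rightarrow> real) \<Rightarrow> 'a set \<Rightarrow> 'a \<Rightarrow> 'a set" where
  "proj_set W \<Xi> b = {a \<in> \<Xi>. \<forall>a'\<in>\<Xi>. cost W a b \<le> cost W a' b}"

text \<open>Xi is Y-maximal: inf over Xi of c(a,b) <= 0 for every b in Y (inf taken in the
  extended reals, so the empty infimum is +infinity).\<close>
definition maximal :: "('a::euclidean_space \<Rightarrow> real) \<Rightarrow> 'a set \<Rightarrow> 'a set \<Rightarrow> bool" where
  "maximal W \<Xi> Y \<longleftrightarrow> (\<forall>b\<in>Y. (INF a\<in>\<Xi>. ereal (cost W a b)) \<le> 0)"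

text \<open>Autoencoder: Borel probability measure gamma on R^L x R^L (second factor the data
  space; it carries X since the second marginal is p, which is concentrated on X),
  with second marginal p, g(X) integrable, and E_gamma[g(X) | a] = a gamma-a.e.
  (componentwise conditional expectation w.r.t. the sigma algebra generated by a).\<close>
definition autoencoder ::
  "'a::euclidean_space measure \<Rightarrow> ('a \<Rightarrow> 'a) \<Rightarrow> ('a \<times> 'a) measure \<Rightarrow> bool" where
  "autoencoder p g \<gamma> \<longleftrightarrow>
     prob_space \<gamma> \<and> sets \<gamma> = sets (borel :: ('a \<times> 'a) measure) \<and>
     distr \<gamma> borel snd = p \<and>
     integrable \<gamma> (\<lambda>z. g (snd z)) \<and>
     (AE z in \<gamma>. \<forall>b\<in>Basis.
        real_cond_exp \<gamma> (vimage_algebra (space \<gamma>) fst borel) (\<lambda>z. g (snd z) \<bullet> b) z = fst z \<bullet> b)"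

text \<open>Optimal autoencoder: maximizes E_gamma[W(a)] over all autoencoders (objective
  finite for gamma; competitors with non-finite objective are excluded since the
  Bochner integral is not meaningful for them).\<close>
definition optimal_autoencoder ::
  "'a::euclidean_space measure \<Rightarrow> ('a \<Rightarrow> 'a) \<Rightarrow> ('a \<Rightarrow> real) \<Rightarrow> ('a \<times> 'a) measure \<Rightarrow> bool" where
  "optimal_autoencoder p g W \<gamma> \<longleftrightarrow>
     autoencoder p g \<gamma> \<and> integrable \<gamma> (\<lambda>z. W (fst z)) \<and>
     (\<forall>\<gamma>'. autoencoder p g \<gamma>' \<and> integrable \<gamma>' (\<lambda>z. W (fst z)) \<longrightarrow>
        (\<integral>z. W (fst z) \<partial>\<gamma>') \<le> (\<integral>z. W (fst z) \<partial>\<gamma>))"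

end

theory Submission
  imports Defs
begin
lemma fst_meas: "sets M = sets (borel :: ('a::euclidean_space \<times> 'a) measure) \<Longrightarrow> (\<lambda>z. fst z) \<in> borel_measurable M"
  by (metis borel_prod measurable_cong_sets measurable_fst)
lemma snd_meas: "sets M = sets (borel :: ('a::euclidean_space \<times> 'a) measure) \<Longrightarrow> (\<lambda>z. snd z) \<in> borel_measurable M"
  by (metis borel_prod measurable_cong_sets measurable_snd)

lemma subalg_fst:
  fixes M :: "('a::euclidean_space \<times> 'a) measure"
  assumes "prob_space M" "sets M = sets borel"
  shows "sigma_finite_subalgebra M (vimage_algebra (space M) fst borel)"
proof -
  interpret prob_space M by fact
  have "subalgebra M (vimage_algebra (space M) fst borel)"
    unfolding subalgebra_def
  proof
    show "sets (vimage_algebra (space M) fst borel) \<subseteq> sets M"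
      using fst_meas[OF assms(2)] by (auto simp: sets_vimage_algebra2 measurable_sets)
  qed simp
  then have "finite_measure_subalgebra M (vimage_algebra (space M) fst borel)"
    by (simp add: finite_measure_axioms finite_measure_subalgebra_axioms.intro finite_measure_subalgebra_def)
  then show ?thesis by (rule finite_measure_subalgebra_is_sigma_finite)
qed

lemma CE:
  fixes M :: "('a::euclidean_space \<times> 'a) measure" and g :: "'a \<Rightarrow> 'a" and H :: "'a \<Rightarrow> 'a"
  assumes ae: "autoencoder p g M" and H: "H \<in> borel_measurable borel" "\<And>a. norm (H a) \<le> K"
  shows "integrable M (\<lambda>z. fst z)" "integrable M (\<lambda>z. H (fst z) \<bullet> g (snd z))"
    "integrable M (\<lambda>z. H (fst z) \<bullet> fst z)"
    "(\<integral>z. H (fst z) \<bullet> g (snd z) \<partial>M) = (\<integral>z. H (fst z) \<bullet> fst z \<partial>M)"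
proof -
  define F where "F = vimage_algebra (space M) fst borel"
  have pM: "prob_space M" and sM: "sets M = sets borel" and gi: "integrable M (\<lambda>z. g (snd z))"
    and AEc: "AE z in M. \<forall>b\<in>Basis. real_cond_exp M F (\<lambda>z. g (snd z) \<bullet> b) z = fst z \<bullet> b"
    using ae unfolding autoencoder_def F_def by auto
  interpret sigma_finite_subalgebra M F unfolding F_def by (rule subalg_fst[OF pM sM])
  have fm[measurable]: "(\<lambda>z. fst z) \<in> borel_measurable M" by (rule fst_meas[OF sM])
  have sm[measurable]: "(\<lambda>z. snd z) \<in> borel_measurable M" by (rule snd_meas[OF sM])
  have gm: "(\<lambda>z. g (snd z)) \<in> borel_measurable M" using gi by auto
  have Hm[measurable]: "(\<lambda>z. H (fst z)) \<in> borel_measurable M"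
    using H(1) fm by (rule measurable_compose[rotated])
  have fF: "(\<lambda>z. fst z) \<in> measurable F borel" unfolding F_def
    by (rule measurable_vimage_algebra1) auto
  have HF: "(\<lambda>z. H (fst z) \<bullet> b) \<in> borel_measurable F" for b
    using measurable_compose[OF fF H(1)] by measurable
  have ce: "AE z in M. real_cond_exp M F (\<lambda>z. g (snd z) \<bullet> b) z = fst z \<bullet> b" if "b \<in> Basis" for b
    using AEc that by auto
  have ci: "integrable M (\<lambda>z. fst z \<bullet> b)" if b: "b \<in> Basis" for b
  proof -
    have "integrable M (real_cond_exp M F (\<lambda>z. g (snd z) \<bullet> b))"
      using gi by (intro real_cond_exp_int) auto
    then show ?thesis by (rule integrable_cong_AE_imp[OF _ _ ce[OF b]]) auto
  qed
  have "integrable M (\<lambda>z. \<Sum>b\<in>Basis. (fst z \<bullet> b) *\<^sub>R b)"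
    by (rule Bochner_Integration.integrable_sum, rule integrable_scaleR_left, rule ci)
  then show fi: "integrable M (\<lambda>z. fst z)" by (simp add: euclidean_representation)
  have bd: "integrable M (\<lambda>z. H (fst z) \<bullet> f z)" if fi: "integrable M f" and [measurable]: "f \<in> borel_measurable M" for f :: "_ \<Rightarrow> 'a"
  proof (rule Bochner_Integration.integrable_bound)
    show "integrable M (\<lambda>z. K * norm (f z))" using fi by auto
    show "(\<lambda>z. H (fst z) \<bullet> f z) \<in> borel_measurable M" by measurable
    show "AE z in M. norm (H (fst z) \<bullet> f z) \<le> norm (K * norm (f z))"
    proof (rule AE_I2)
      fix z
      have "norm (H (fst z) \<bullet> f z) \<le> norm (H (fst z)) * norm (f z)" by (simp add: Cauchy_Schwarz_ineq2)
      also have "\<dots> \<le> K * norm (f z)" by (simp add: H(2) mult_right_mono)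
      also have "\<dots> \<le> norm (K * norm (f z))" by simp
      finally show "norm (H (fst z) \<bullet> f z) \<le> norm (K * norm (f z))" .
    qed
  qed
  show i1: "integrable M (\<lambda>z. H (fst z) \<bullet> g (snd z))" using bd[OF gi gm] .
  show i2: "integrable M (\<lambda>z. H (fst z) \<bullet> fst z)" using bd[OF fi fm] .
  have intb: "integrable M (\<lambda>z. (H (fst z) \<bullet> b) * (g (snd z) \<bullet> b))" for b
      using bd[of "\<lambda>z. (g (snd z) \<bullet> b) *\<^sub>R b"] gi gm by (auto simp: inner_scaleR_right mult.commute)
  have intf: "integrable M (\<lambda>z. (H (fst z) \<bullet> b) * (fst z \<bullet> b))" for b
      using bd[of "\<lambda>z. (fst z \<bullet> b) *\<^sub>R b"] fi by (auto simp: inner_scaleR_right mult.commute)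
  have comp: "(\<integral>z. (H (fst z) \<bullet> b) * (g (snd z) \<bullet> b) \<partial>M) = (\<integral>z. (H (fst z) \<bullet> b) * (fst z \<bullet> b) \<partial>M)"
    if b: "b \<in> Basis" for b
  proof -
    have int: "integrable M (\<lambda>z. (H (fst z) \<bullet> b) * (g (snd z) \<bullet> b))"
      using bd[of "\<lambda>z. (g (snd z) \<bullet> b) *\<^sub>R b"] gi gm by (auto simp: inner_scaleR_right mult.commute)
    have "(\<integral>z. (H (fst z) \<bullet> b) * (g (snd z) \<bullet> b) \<partial>M) = (\<integral>z. (H (fst z) \<bullet> b) * real_cond_exp M F (\<lambda>z. g (snd z) \<bullet> b) z \<partial>M)"
      using real_cond_exp_intg(2)[OF int HF] gm by (simp add: borel_measurable_inner)
    also have "\<dots> = (\<integral>z. (H (fst z) \<bullet> b) * (fst z \<bullet> b) \<partial>M)"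
      using ce[OF b] by (intro integral_cong_AE) auto
    finally show ?thesis .
  qed
  have "(\<integral>z. H (fst z) \<bullet> g (snd z) \<partial>M) = (\<integral>z. (\<Sum>b\<in>Basis. (H (fst z) \<bullet> b) * (g (snd z) \<bullet> b)) \<partial>M)"
    by (subst euclidean_inner) simp
  also have "\<dots> = (\<Sum>b\<in>Basis. (\<integral>z. (H (fst z) \<bullet> b) * (g (snd z) \<bullet> b) \<partial>M))"
    by (rule Bochner_Integration.integral_sum) (rule intb)
  also have "\<dots> = (\<Sum>b\<in>Basis. (\<integral>z. (H (fst z) \<bullet> b) * (fst z \<bullet> b) \<partial>M))"
    using comp by simp
  also have "\<dots> = (\<integral>z. (\<Sum>b\<in>Basis. (H (fst z) \<bullet> b) * (fst z \<bullet> b)) \<partial>M)"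
    by (rule Bochner_Integration.integral_sum[symmetric]) (rule intf)
  also have "\<dots> = (\<integral>z. H (fst z) \<bullet> fst z \<partial>M)"
    by (subst (2) euclidean_inner) simp
  finally show "(\<integral>z. H (fst z) \<bullet> g (snd z) \<partial>M) = (\<integral>z. H (fst z) \<bullet> fst z \<partial>M)" .
qed

lemma AE_data:
  fixes M :: "('a::euclidean_space \<times> 'a) measure"
  assumes ae: "autoencoder p g M" and Q: "AE x in p. Q x"
  shows "AE z in M. Q (snd z)"
proof -
  have sM: "sets M = sets borel" and d: "distr M borel snd = p" using ae unfolding autoencoder_def by auto
  have "AE x in distr M borel snd. Q x" unfolding d by (rule Q)
  then show ?thesis by (rule AE_distrD[OF snd_meas[OF sM]])
qed

lemma halfspace:
  fixes M :: "('a::euclidean_space \<times> 'a) measure"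
  assumes ae: "autoencoder p g M" and hv: "AE x in p. g x \<bullet> v \<le> t"
  shows "AE z in M. fst z \<bullet> v \<le> t"
proof -
  have sM: "sets M = sets borel" and gi: "integrable M (\<lambda>z. g (snd z))"
    using ae unfolding autoencoder_def by auto
  have fm[measurable]: "(\<lambda>z. fst z) \<in> borel_measurable M" by (rule fst_meas[OF sM])
  have gm[measurable]: "(\<lambda>z. g (snd z)) \<in> borel_measurable M" using gi by auto
  define S where "S = {a::'a. a \<bullet> v > t}"
  have So: "open S" unfolding S_def by (intro open_Collect_less continuous_intros)
  then have Sb[measurable]: "S \<in> sets borel" by auto
  define H where "H a = indicator S a *\<^sub>R v" for a
  have Hm: "H \<in> borel_measurable borel" unfolding H_def by measurable
  have Hb: "norm (H a) \<le> norm v" for a unfolding H_def by (auto simp: indicator_def)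
  note C = CE[OF ae Hm Hb]
  define f where "f z = indicator S (fst z) * (fst z \<bullet> v - g (snd z) \<bullet> v)" for z
  have fi: "integrable M f"
  proof -
    have "integrable M (\<lambda>z. H (fst z) \<bullet> fst z - H (fst z) \<bullet> g (snd z))"
      using C(2,3) by auto
    then show ?thesis unfolding f_def H_def by (simp add: algebra_simps inner_commute)
  qed
  have "integral\<^sup>L M f = (\<integral>z. H (fst z) \<bullet> fst z - H (fst z) \<bullet> g (snd z) \<partial>M)"
    unfolding f_def H_def by (simp add: algebra_simps inner_commute)
  also have "\<dots> = 0" using C(2,3,4) by simp
  finally have f0: "integral\<^sup>L M f = 0" .
  have hvM: "AE z in M. g (snd z) \<bullet> v \<le> t" by (rule AE_data[OF ae hv])
  have fnn: "AE z in M. 0 \<le> f z"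
    using hvM by eventually_elim (auto simp: f_def S_def indicator_def)
  have "AE z in M. f z = 0" using integral_nonneg_eq_0_iff_AE[OF fi fnn] f0 by simp
  then show ?thesis using hvM
    by eventually_elim (auto simp: f_def S_def indicator_def split: if_splits)
qed

lemma in_closure:
  fixes M :: "('a::euclidean_space \<times> 'a) measure"
  assumes ae: "autoencoder p g M" and S: "AE x in p. g x \<in> S"
  shows "AE z in M. fst z \<in> closure (convex hull S)"
proof -
  define C where "C = closure (convex hull S)"
  have cC: "convex C" "closed C" unfolding C_def by (auto intro: convex_closure)
  have SC: "S \<subseteq> C" unfolding C_def by (meson closure_subset hull_subset subset_trans)
  define FF where "FF = {{x. a \<bullet> x < b} | a b. \<forall>x\<in>C. a \<bullet> x > b}"
  have op: "open U" if "U \<in> FF" for U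
    using that unfolding FF_def by (auto intro!: open_Collect_less continuous_intros)
  obtain FF' where F': "FF' \<subseteq> FF" "countable FF'" "\<Union>FF' = \<Union>FF"
    using Lindelof[OF op] by blast
  have UF: "\<Union>FF = - C"
  proof
    show "\<Union>FF \<subseteq> - C" unfolding FF_def by force
    show "- C \<subseteq> \<Union>FF"
    proof
      fix y assume "y \<in> - C"
      then have "y \<notin> C" by simp
      then obtain a b where "a \<bullet> y < b" "\<forall>x\<in>C. a \<bullet> x > b"
        using separating_hyperplane_closed_point[OF cC] by blast
      then show "y \<in> \<Union>FF" unfolding FF_def by blast
    qed
  qed
  have "\<forall>U\<in>FF'. AE z in M. fst z \<notin> U"
  proof
    fix U assume "U \<in> FF'"
    then obtain a b where O: "U = {x. a \<bullet> x < b}" and ab: "\<forall>x\<in>C. a \<bullet> x > b"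
      using F'(1) unfolding FF_def by blast
    have "AE x in p. g x \<bullet> (-a) \<le> -b"
      using S by eventually_elim (use SC ab in \<open>force simp: inner_commute\<close>)
    from halfspace[OF ae this] show "AE z in M. fst z \<notin> U"
      by eventually_elim (auto simp: O inner_commute)
  qed
  then have "AE z in M. \<forall>U\<in>FF'. fst z \<notin> U" using F'(2) by (simp add: AE_ball_countable)
  then show ?thesis
    by eventually_elim (use F'(3) UF in \<open>auto simp: C_def\<close>)
qed

lemma affine_ell:
  fixes D :: "'a::euclidean_space \<Rightarrow>\<^sub>L real"
  shows "w + D ((1 - t) *\<^sub>R y + t *\<^sub>R x - \<xi>) = (1 - t) * (w + D (y - \<xi>)) + t * (w + D (x - \<xi>))"
proof -
  have "(1 - t) *\<^sub>R y + t *\<^sub>R x - \<xi> = (1 - t) *\<^sub>R (y - \<xi>) + t *\<^sub>R (x - \<xi>)" by (simp add: algebra_simps)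
  then have "D ((1 - t) *\<^sub>R y + t *\<^sub>R x - \<xi>) = (1 - t) * D (y - \<xi>) + t * D (x - \<xi>)"
    by (simp only: blinfun.add_right blinfun.scaleR_right) simp
  then show ?thesis by (simp add: algebra_simps)
qed

lemma closure_max:
  fixes W :: "'a::euclidean_space \<Rightarrow> real" and D1 :: "'a \<Rightarrow> 'a \<Rightarrow>\<^sub>L real"
  assumes contW: "continuous_on UNIV W"
    and Snz: "S \<noteq> {}"
    and bdd: "\<And>s. s \<in> S \<Longrightarrow> bdd_above ((\<lambda>\<xi>. W \<xi> + D1 \<xi> (s - \<xi>)) ` \<Xi>)"
    and mx: "\<And>y e. y \<in> convex hull S \<Longrightarrow> e > 0 \<Longrightarrow> \<exists>\<xi>\<in>\<Xi>. W \<xi> + D1 \<xi> (y - \<xi>) > W y - e"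
    and y: "y \<in> closure (convex hull S)" and e: "e > 0"
  shows "\<exists>\<xi>\<in>\<Xi>. W \<xi> + D1 \<xi> (y - \<xi>) > W y - e"
proof -
  define l where "l \<xi> z = W \<xi> + D1 \<xi> (z - \<xi>)" for \<xi> z
  define F where "F = {z. bdd_above ((\<lambda>\<xi>. l \<xi> z) ` \<Xi>)}"
  have cF: "convex F"
  proof (unfold convex_alt, intro ballI allI impI)
    fix x z and u :: real assume xF: "x \<in> F" and zF: "z \<in> F" and u: "0 \<le> u \<and> u \<le> 1"
    obtain B1 where B1: "\<And>\<xi>. \<xi> \<in> \<Xi> \<Longrightarrow> l \<xi> x \<le> B1" using xF unfolding F_def bdd_above_def by auto
    obtain B2 where B2: "\<And>\<xi>. \<xi> \<in> \<Xi> \<Longrightarrow> l \<xi> z \<le> B2" using zF unfolding F_def bdd_above_def by auto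
    have "l \<xi> ((1 - u) *\<^sub>R x + u *\<^sub>R z) \<le> (1 - u) * B1 + u * B2" if "\<xi> \<in> \<Xi>" for \<xi>
    proof -
      have "l \<xi> ((1 - u) *\<^sub>R x + u *\<^sub>R z) = (1 - u) * l \<xi> x + u * l \<xi> z"
        unfolding l_def by (rule affine_ell)
      also have "\<dots> \<le> (1 - u) * B1 + u * B2"
        using B1[OF that] B2[OF that] u by (intro add_mono mult_left_mono) auto
      finally show ?thesis .
    qed
    then show "(1 - u) *\<^sub>R x + u *\<^sub>R z \<in> F" unfolding F_def bdd_above_def by auto
  qed
  have SF: "S \<subseteq> F" using bdd unfolding F_def l_def by auto
  have hF: "convex hull S \<subseteq> F" using SF cF by (rule hull_minimal)
  show ?thesis
  proof (cases "y \<in> F")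
    case False
    then obtain \<xi> where "\<xi> \<in> \<Xi>" "l \<xi> y > W y"
      unfolding F_def bdd_above_def by (auto simp: not_le)
    then show ?thesis using e unfolding l_def by force
  next
    case True
    have cS: "convex (convex hull S)" by simp
    have hnz: "convex hull S \<noteq> {}" using Snz by simp
    obtain x0 where x0: "x0 \<in> rel_interior (convex hull S)"
      using rel_interior_eq_empty[OF cS] hnz by auto
    have x0h: "x0 \<in> convex hull S" using x0 rel_interior_subset by auto
    obtain s0 where "s0 \<in> S" using Snz by auto
    then have "s0 \<in> convex hull S" by (simp add: hull_inc)
    then obtain \<xi>0 where \<xi>0: "\<xi>0 \<in> \<Xi>" using mx[of s0 1] by auto
    then have Xnz: "\<Xi> \<noteq> {}" by auto
    define phi where "phi z = Sup ((\<lambda>\<xi>. l \<xi> z) ` \<Xi>)" for z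
    have phiub: "l \<xi> z \<le> phi z" if "z \<in> F" "\<xi> \<in> \<Xi>" for \<xi> z
      unfolding phi_def using that unfolding F_def by (auto intro: cSup_upper)
    have key: "W z \<le> B" if zh: "z \<in> convex hull S" and lB: "\<And>\<xi>. \<xi> \<in> \<Xi> \<Longrightarrow> l \<xi> z \<le> B" for z B
    proof (rule ccontr)
      assume "\<not> W z \<le> B"
      then have "W z - B > 0" by simp
      from mx[OF zh this] obtain \<xi> where "\<xi> \<in> \<Xi>" "l \<xi> z > W z - (W z - B)" unfolding l_def by auto
      with lB show False by force
    qed
    have Wle: "W y \<le> phi y"
    proof (cases "y = x0")
      case True
      show ?thesis by (rule key) (use True x0h phiub \<open>y \<in> F\<close> in auto)
    next
      case False
      define t where "t n = inverse (real (Suc (Suc n)))" for n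
      have t01: "0 < t n" "t n < 1" for n unfolding t_def by (auto simp: field_simps)
      define z where "z n = (1 - t n) *\<^sub>R y + t n *\<^sub>R x0" for n
      have zin: "z n \<in> convex hull S" for n
      proof -
        have "z n \<in> open_segment x0 y"
          unfolding in_segment z_def using False t01[of n]
          by (intro conjI exI[of _ "1 - t n"]) (auto simp: algebra_simps)
        then show ?thesis
          using rel_interior_closure_convex_segment[OF cS x0 y] rel_interior_subset by blast
      qed
      have bnd: "W (z n) \<le> (1 - t n) * phi y + t n * phi x0" for n
      proof (rule key[OF zin])
        fix \<xi> assume xi: "\<xi> \<in> \<Xi>"
        have "l \<xi> (z n) = (1 - t n) * l \<xi> y + t n * l \<xi> x0"
          unfolding l_def z_def by (rule affine_ell)
        also have "\<dots> \<le> (1 - t n) * phi y + t n * phi x0"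
          using phiub[OF \<open>y \<in> F\<close> xi] phiub[OF subsetD[OF hF x0h] xi] t01[of n]
          by (intro add_mono mult_left_mono) auto
        finally show "l \<xi> (z n) \<le> (1 - t n) * phi y + t n * phi x0" .
      qed
      have t0: "t \<longlonglongrightarrow> 0" unfolding t_def using LIMSEQ_inverse_real_of_nat by (rule LIMSEQ_Suc)
      have "z \<longlonglongrightarrow> (1 - 0) *\<^sub>R y + 0 *\<^sub>R x0" unfolding z_def by (intro tendsto_intros t0)
      then have zy: "z \<longlonglongrightarrow> y" by simp
      have "(\<lambda>n. W (z n)) \<longlonglongrightarrow> W y"
        using contW zy by (metis UNIV_I continuous_on_def filterlim_compose tendsto_at_iff_tendsto_nhds)
      moreover have "(\<lambda>n. (1 - t n) * phi y + t n * phi x0) \<longlonglongrightarrow> (1 - 0) * phi y + 0 * phi x0"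
        by (intro tendsto_intros t0)
      ultimately show ?thesis using bnd by (intro LIMSEQ_le) auto
    qed
    have bddy: "bdd_above ((\<lambda>\<xi>. l \<xi> y) ` \<Xi>)" using True unfolding F_def by simp
    have "phi y - e < phi y" using e by simp
    then obtain \<xi> where "\<xi> \<in> \<Xi>" "phi y - e < l \<xi> y"
      unfolding phi_def using less_cSup_iff[of "(\<lambda>\<xi>. l \<xi> y) ` \<Xi>"] Xnz bddy by auto
    then show ?thesis using Wle unfolding l_def by force
  qed
qed

primrec maxaff :: "(nat \<Rightarrow> real) \<Rightarrow> (nat \<Rightarrow> 'a::euclidean_space) \<Rightarrow> nat \<Rightarrow> 'a \<Rightarrow> real" where
  "maxaff c V 0 y = c 0 + V 0 \<bullet> y"
| "maxaff c V (Suc N) y = max (maxaff c V N y) (c (Suc N) + V (Suc N) \<bullet> y)"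

lemma MA_ge: "n \<le> N \<Longrightarrow> c n + V n \<bullet> y \<le> maxaff c V N y"
proof (induction N)
  case 0 then show ?case by simp
next
  case (Suc N) then show ?case by (cases "n = Suc N") (auto simp: le_Suc_eq max_def)
qed

lemma MA_mono: "N \<le> N' \<Longrightarrow> maxaff c V N y \<le> maxaff c V N' y"
proof (induction N' )
  case 0 then show ?case by simp
next
  case (Suc N') then show ?case by (cases "N = Suc N'") (auto simp: le_Suc_eq max_def)
qed

lemma MA_meas[measurable]: "maxaff c V N \<in> borel_measurable borel"
  by (induction N) (simp_all add: borel_measurable_max)

lemma MA_rep: "\<exists>\<alpha> H K. \<alpha> \<in> borel_measurable borel \<and> H \<in> borel_measurable borel \<and>
   (\<forall>y. \<bar>\<alpha> y\<bar> \<le> K \<and> norm (H y) \<le> K) \<and> (\<forall>y. maxaff c V N y = \<alpha> y + H y \<bullet> y) \<and>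
   (\<forall>y y'. \<alpha> y + H y \<bullet> y' \<le> maxaff c V N y')"
proof (induction N)
  case 0
  show ?case
    by (rule exI[of _ "\<lambda>_. c 0"], rule exI[of _ "\<lambda>_. V 0"], rule exI[of _ "max \<bar>c 0\<bar> (norm (V 0))"]) simp
next
  case (Suc N)
  then obtain \<alpha> H K where am[measurable]: "\<alpha> \<in> borel_measurable borel" and Hm[measurable]: "H \<in> borel_measurable borel"
    and K: "\<forall>y. \<bar>\<alpha> y\<bar> \<le> K \<and> norm (H y) \<le> K" and rep: "\<forall>y. maxaff c V N y = \<alpha> y + H y \<bullet> y"
    and sup: "\<forall>y y'. \<alpha> y + H y \<bullet> y' \<le> maxaff c V N y'" by blast
  define P where "P y \<longleftrightarrow> maxaff c V N y < c (Suc N) + V (Suc N) \<bullet> y" for y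
  have Pm[measurable]: "{y. P y} \<in> sets borel" unfolding P_def by measurable
  define \<alpha>' where "\<alpha>' y = (if P y then c (Suc N) else \<alpha> y)" for y
  define H' where "H' y = (if P y then V (Suc N) else H y)" for y
  show ?case
  proof (rule exI[of _ \<alpha>'], rule exI[of _ H'], rule exI[of _ "max K (max \<bar>c (Suc N)\<bar> (norm (V (Suc N))))"], intro conjI allI)
    show "\<alpha>' \<in> borel_measurable borel" unfolding \<alpha>'_def P_def by measurable
    show "H' \<in> borel_measurable borel" unfolding H'_def P_def by measurable
    fix y
    show "\<bar>\<alpha>' y\<bar> \<le> max K (max \<bar>c (Suc N)\<bar> (norm (V (Suc N))))"
      using K unfolding \<alpha>'_def by (auto simp: le_max_iff_disj)
    show "norm (H' y) \<le> max K (max \<bar>c (Suc N)\<bar> (norm (V (Suc N))))"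
      using K unfolding H'_def by (auto simp: le_max_iff_disj)
    show "maxaff c V (Suc N) y = \<alpha>' y + H' y \<bullet> y"
      using rep unfolding \<alpha>'_def H'_def P_def by auto
    fix y'
    show "\<alpha>' y + H' y \<bullet> y' \<le> maxaff c V (Suc N) y'"
      using sup unfolding \<alpha>'_def H'_def by (auto simp: le_max_iff_disj)
  qed
qed

lemma MA_bound: "\<exists>K. \<forall>y. \<bar>maxaff c V N y\<bar> \<le> K + K * norm y"
proof -
  obtain \<alpha> H K where K: "\<forall>y. \<bar>\<alpha> y\<bar> \<le> K \<and> norm (H y) \<le> K" and rep: "\<forall>y. maxaff c V N y = \<alpha> y + H y \<bullet> y"
    using MA_rep by blast
  have "\<bar>maxaff c V N y\<bar> \<le> K + K * norm y" for y
  proof -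
    have "\<bar>maxaff c V N y\<bar> \<le> \<bar>\<alpha> y\<bar> + \<bar>H y \<bullet> y\<bar>" using rep by simp
    also have "\<bar>H y \<bullet> y\<bar> \<le> norm (H y) * norm y" by (rule Cauchy_Schwarz_ineq2)
    also have "norm (H y) * norm y \<le> K * norm y" using K by (simp add: mult_right_mono)
    finally show ?thesis using K[rule_format, of y] by linarith
  qed
  then show ?thesis by blast
qed

lemma MA_integrable:
  fixes f :: "'b \<Rightarrow> 'a::euclidean_space"
  assumes fm: "finite_measure M" and fi: "integrable M f"
  shows "integrable M (\<lambda>x. maxaff c V N (f x))"
proof -
  obtain K where K: "\<And>y. \<bar>maxaff c V N y\<bar> \<le> K + K * norm y" using MA_bound by blast
  have K0: "0 \<le> K" using K[of 0] by simp
  interpret finite_measure M by (rule fm)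
  show ?thesis
  proof (rule Bochner_Integration.integrable_bound)
    show "integrable M (\<lambda>x. K + K * norm (f x))" using fi by auto
    show "(\<lambda>x. maxaff c V N (f x)) \<in> borel_measurable M"
      using fi by (intro measurable_compose[OF _ MA_meas]) auto
    show "AE x in M. norm (maxaff c V N (f x)) \<le> norm (K + K * norm (f x))"
      using K K0 by (intro AE_I2) (smt (verit, best) norm_ge_zero real_norm_def mult_nonneg_nonneg)
  qed
qed

lemma comp_ineq:
  fixes M :: "('a::euclidean_space \<times> 'a) measure"
  assumes ae: "autoencoder p g M"
  shows "integrable M (\<lambda>z. maxaff c V N (fst z))" "integrable M (\<lambda>z. maxaff c V N (g (snd z)))"
    "(\<integral>z. maxaff c V N (fst z) \<partial>M) \<le> (\<integral>z. maxaff c V N (g (snd z)) \<partial>M)"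
proof -
  obtain \<alpha> H K where am[measurable]: "\<alpha> \<in> borel_measurable borel" and Hm[measurable]: "H \<in> borel_measurable borel"
    and K: "\<forall>y. \<bar>\<alpha> y\<bar> \<le> K \<and> norm (H y) \<le> K" and rep: "\<forall>y. maxaff c V N y = \<alpha> y + H y \<bullet> y"
    and sup: "\<forall>y y'. \<alpha> y + H y \<bullet> y' \<le> maxaff c V N y'" using MA_rep by blast
  have pM: "prob_space M" and sM: "sets M = sets borel" and gi: "integrable M (\<lambda>z. g (snd z))"
    using ae unfolding autoencoder_def by auto
  interpret prob_space M by (rule pM)
  have fm[measurable]: "(\<lambda>z. fst z) \<in> borel_measurable M" by (rule fst_meas[OF sM])
  note C = CE[OF ae Hm, of K]
  have Hb: "\<And>a. norm (H a) \<le> K" using K by auto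
  have ai: "integrable M (\<lambda>z. \<alpha> (fst z))"
    using K by (intro integrable_const_bound[of _ K]) auto
  show i1: "integrable M (\<lambda>z. maxaff c V N (fst z))"
    using C(1)[OF Hb] finite_measure_axioms by (rule MA_integrable[rotated])
  show i2: "integrable M (\<lambda>z. maxaff c V N (g (snd z)))"
    using gi finite_measure_axioms by (rule MA_integrable[rotated])
  have "(\<integral>z. maxaff c V N (fst z) \<partial>M) = (\<integral>z. \<alpha> (fst z) + H (fst z) \<bullet> fst z \<partial>M)"
    using rep by simp
  also have "\<dots> = (\<integral>z. \<alpha> (fst z) \<partial>M) + (\<integral>z. H (fst z) \<bullet> fst z \<partial>M)"
    using ai C(3)[OF Hb] by (rule Bochner_Integration.integral_add)
  also have "\<dots> = (\<integral>z. \<alpha> (fst z) \<partial>M) + (\<integral>z. H (fst z) \<bullet> g (snd z) \<partial>M)"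
    using C(4)[OF Hb] by simp
  also have "\<dots> = (\<integral>z. \<alpha> (fst z) + H (fst z) \<bullet> g (snd z) \<partial>M)"
    using ai C(2)[OF Hb] by (rule Bochner_Integration.integral_add[symmetric])
  also have "\<dots> \<le> (\<integral>z. maxaff c V N (g (snd z)) \<partial>M)"
    using ai C(2)[OF Hb] i2 sup by (intro integral_mono) auto
  finally show "(\<integral>z. maxaff c V N (fst z) \<partial>M) \<le> (\<integral>z. maxaff c V N (g (snd z)) \<partial>M)" .
qed

lemma T_meas:
  fixes A :: "'a::euclidean_space \<Rightarrow> 'a"
  assumes ps: "sets p = sets borel" and Ab[measurable]: "A \<in> borel_measurable borel"
  shows "(\<lambda>x. (A x, x)) \<in> measurable p borel"
proof -
  have "measurable p borel = measurable borel (borel \<Otimes>\<^sub>M borel :: ('a \<times> 'a) measure)"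
    by (metis borel_prod measurable_cong_sets ps)
  moreover have "(\<lambda>x. (A x, x)) \<in> measurable borel (borel \<Otimes>\<^sub>M borel :: ('a \<times> 'a) measure)" by measurable
  ultimately show ?thesis by simp
qed

lemma stepC:
  fixes p :: "'a::euclidean_space measure" and g A Gr :: "'a \<Rightarrow> 'a" and W F :: "'a \<Rightarrow> real"
  assumes pp: "prob_space p" and ps: "sets p = sets borel"
    and gb[measurable]: "g \<in> borel_measurable borel" and Ab[measurable]: "A \<in> borel_measurable borel"
    and Grb[measurable]: "Gr \<in> borel_measurable borel"
    and WAi: "integrable p (\<lambda>x. W (A x))" and Fi: "integrable p F"
    and aeg: "autoencoder p g (distr p borel (\<lambda>x. (A x, x)))"
    and le: "AE x in p. F x \<le> W (A x) + Gr (A x) \<bullet> (g x - A x)"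
  shows "integral\<^sup>L p F \<le> (\<integral>x. W (A x) \<partial>p)"
proof -
  interpret prob_space p by (rule pp)
  have Tm: "(\<lambda>x. (A x, x)) \<in> measurable p borel" by (rule T_meas[OF ps Ab])
  have fb: "fst \<in> borel_measurable (borel :: ('a \<times> 'a) measure)" by (rule fst_meas) simp
  have sb: "snd \<in> borel_measurable (borel :: ('a \<times> 'a) measure)" by (rule snd_meas) simp
  have mp: "measurable p = measurable borel" by (intro ext measurable_cong_sets) (auto simp: ps)
  define H where "H n a = (if norm (Gr a) \<le> real n then Gr a else 0)" for n :: nat and a
  have Hm[measurable]: "H n \<in> borel_measurable borel" for n unfolding H_def by measurable
  have Hb: "norm (H n a) \<le> real n" for n a unfolding H_def by auto
  have I1: "integrable p (\<lambda>x. H n (A x) \<bullet> g x)" and I2: "integrable p (\<lambda>x. H n (A x) \<bullet> A x)"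
    and Eq: "(\<integral>x. H n (A x) \<bullet> g x \<partial>p) = (\<integral>x. H n (A x) \<bullet> A x \<partial>p)" for n
  proof -
    note C = CE[OF aeg Hm[of n] Hb[of n]]
    have m1: "(\<lambda>z. H n (fst z) \<bullet> g (snd z)) \<in> borel_measurable (borel :: ('a \<times> 'a) measure)"
      by (intro borel_measurable_inner measurable_compose[OF fb Hm] measurable_compose[OF sb gb])
    have m2: "(\<lambda>z. H n (fst z) \<bullet> fst z) \<in> borel_measurable (borel :: ('a \<times> 'a) measure)"
      by (intro borel_measurable_inner measurable_compose[OF fb Hm] fb)
    show "integrable p (\<lambda>x. H n (A x) \<bullet> g x)"
      using C(2) integrable_distr_eq[OF Tm m1] by simp
    show "integrable p (\<lambda>x. H n (A x) \<bullet> A x)"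
      using C(3) integrable_distr_eq[OF Tm m2] by simp
    show "(\<integral>x. H n (A x) \<bullet> g x \<partial>p) = (\<integral>x. H n (A x) \<bullet> A x \<partial>p)"
      using C(4) integral_distr[OF Tm m1] integral_distr[OF Tm m2] by simp
  qed
  define f where "f x = F x - W (A x)" for x
  have fi: "integrable p f" unfolding f_def using Fi WAi by auto
  have fm[measurable]: "f \<in> borel_measurable borel"
    using borel_measurable_integrable[OF fi] by (metis measurable_cong_sets ps)
  define s where "s n x = (if norm (Gr (A x)) \<le> real n then f x else 0)" for n :: nat and x
  have sm: "s n \<in> borel_measurable p" for n
  proof -
    have "s n \<in> borel_measurable borel" unfolding s_def by measurable
    then show ?thesis by (metis measurable_cong_sets ps)
  qed
  have lim: "AE x in p. (\<lambda>n. s n x) \<longlonglongrightarrow> f x"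
  proof (rule AE_I2, rule tendsto_eventually)
    fix x
    show "eventually (\<lambda>n. s n x = f x) sequentially"
      unfolding eventually_sequentially s_def
      by (rule exI[of _ "nat \<lceil>norm (Gr (A x))\<rceil>"]) (auto intro: order.trans[OF real_nat_ceiling_ge])
  qed
  have bnd: "AE x in p. norm (s n x) \<le> \<bar>f x\<bar>" for n unfolding s_def by auto
  have fim: "f \<in> borel_measurable p" using fi by auto
  note DC = integral_dominated_convergence[OF fim sm _ lim bnd] integrable_dominated_convergence2[OF fim sm _ lim bnd]
  have sle: "integral\<^sup>L p (s n) \<le> 0" for n
  proof -
    have "integral\<^sup>L p (s n) \<le> (\<integral>x. H n (A x) \<bullet> g x - H n (A x) \<bullet> A x \<partial>p)"
    proof (rule integral_mono_AE)
      show "integrable p (s n)" using DC(2) fi by auto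
      show "integrable p (\<lambda>x. H n (A x) \<bullet> g x - H n (A x) \<bullet> A x)" using I1 I2 by auto
      show "AE x in p. s n x \<le> H n (A x) \<bullet> g x - H n (A x) \<bullet> A x"
        using le by eventually_elim (auto simp: s_def H_def f_def inner_diff_right)
    qed
    also have "\<dots> = 0" using I1 I2 Eq by simp
    finally show ?thesis .
  qed
  have "integral\<^sup>L p f \<le> 0"
    using DC(1) fi sle by (intro LIMSEQ_le_const2[of "\<lambda>n. integral\<^sup>L p (s n)"]) auto
  then show ?thesis using Fi WAi unfolding f_def by simp
qed

lemma stepD:
  fixes M :: "('a::euclidean_space \<times> 'a) measure" and W :: "'a \<Rightarrow> real"
  assumes ae: "autoencoder p g M" and Wi: "integrable M (\<lambda>z. W (fst z))"
    and Wb[measurable]: "W \<in> borel_measurable borel"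
    and lim: "AE z in M. \<forall>e>0. \<exists>n. c n + V n \<bullet> fst z > W (fst z) - e"
    and bd: "\<And>N. (\<integral>z. maxaff c V N (fst z) \<partial>M) \<le> B"
  shows "(\<integral>z. W (fst z) \<partial>M) \<le> B"
proof -
  have pM: "prob_space M" and sM: "sets M = sets borel"
    using ae unfolding autoencoder_def by auto
  interpret prob_space M by (rule pM)
  have fm[measurable]: "(\<lambda>z. fst z) \<in> borel_measurable M" by (rule fst_meas[OF sM])
  have fi: "integrable M (\<lambda>z. fst z)"
    using CE(1)[OF ae, of "\<lambda>_. 0" 0] by simp
  define s where "s N (z :: 'a \<times> 'a) = min (W (fst z)) (maxaff c V N (fst z))" for N z
  define w where "w (z :: 'a \<times> 'a) = \<bar>W (fst z)\<bar> + \<bar>c 0 + V 0 \<bullet> fst z\<bar>" for z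
  have wi: "integrable M w" unfolding w_def using Wi fi by (intro Bochner_Integration.integrable_add integrable_abs) auto
  have sm: "s N \<in> borel_measurable M" for N unfolding s_def by measurable
  have Wm: "(\<lambda>z. W (fst z)) \<in> borel_measurable M" by measurable
  have lim': "AE z in M. (\<lambda>N. s N z) \<longlonglongrightarrow> W (fst z)"
    using lim
  proof eventually_elim
    case (elim z)
    show ?case
    proof (rule order_tendstoI)
      fix a assume a: "a < W (fst z)"
      then obtain n where n: "c n + V n \<bullet> fst z > a" using elim[rule_format, of "W (fst z) - a"] by auto
      have "a < s N z" if "n \<le> N" for N
        using MA_ge[OF that, of c V "fst z"] n a unfolding s_def by auto
      then show "eventually (\<lambda>N. a < s N z) sequentially" unfolding eventually_sequentially by blast
    next
      fix a assume a: "W (fst z) < a"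
      then show "eventually (\<lambda>N. s N z < a) sequentially" unfolding s_def by (intro always_eventually allI) (simp add: min_less_iff_disj)
    qed
  qed
  have bnd: "AE z in M. norm (s N z) \<le> w z" for N
  proof (rule AE_I2)
    fix z :: "'a \<times> 'a"
    have "c 0 + V 0 \<bullet> fst z \<le> maxaff c V N (fst z)" by (rule MA_ge) simp
    then show "norm (s N z) \<le> w z" unfolding s_def w_def by auto
  qed
  note DC = integral_dominated_convergence[OF Wm sm wi lim' bnd] integrable_dominated_convergence2[OF Wm sm wi lim' bnd]
  have "integral\<^sup>L M (s N) \<le> B" for N
  proof -
    have "integral\<^sup>L M (s N) \<le> (\<integral>z. maxaff c V N (fst z) \<partial>M)"
      proof (rule integral_mono)
      show "integrable M (s N)" using DC(2)[of N] .
      show "integrable M (\<lambda>z. maxaff c V N (fst z))" by (rule comp_ineq(1)[OF ae])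
    qed (auto simp: s_def)
    then show ?thesis using bd[of N] by simp
  qed
  then show ?thesis using DC(1) by (intro LIMSEQ_le_const2[of "\<lambda>N. integral\<^sup>L M (s N)"]) auto
qed

lemma MA_le: "(\<And>n. n \<le> N \<Longrightarrow> c n + V n \<bullet> y \<le> B) \<Longrightarrow> maxaff c V N y \<le> B"
  by (induction N) auto

lemma blin_grad:
  fixes D :: "'a::euclidean_space \<Rightarrow>\<^sub>L real"
  shows "D v = (\<Sum>b\<in>Basis. D b *\<^sub>R b) \<bullet> v"
proof -
  have "D v = D (\<Sum>b\<in>Basis. (v \<bullet> b) *\<^sub>R b)" by (simp add: euclidean_representation)
  also have "\<dots> = (\<Sum>b\<in>Basis. (v \<bullet> b) * D b)" by (simp add: blinfun.sum_right blinfun.scaleR_right)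
  also have "\<dots> = (\<Sum>b\<in>Basis. D b * (b \<bullet> v))" by (intro sum.cong refl) (simp add: inner_commute)
  also have "\<dots> = (\<Sum>b\<in>Basis. D b *\<^sub>R b) \<bullet> v" by (simp add: inner_sum_left)
  finally show ?thesis .
qed

theorem theorem7:
  fixes \<X> :: "'a::euclidean_space set" and p :: "'a measure"
    and g :: "'a \<Rightarrow> 'a" and W :: "'a \<Rightarrow> real"
    and \<Xi> :: "'a set" and A :: "'a \<Rightarrow> 'a"
  assumes X_borel: "\<X> \<in> sets borel"
    and p_prob: "prob_space p" and p_sets: "sets p = sets borel"
    and p_on_X: "AE x in p. x \<in> \<X>"
    and p_density: "\<exists>f \<in> borel_measurable lborel. p = density lborel f"
    and g_borel: "g \<in> borel_measurable borel"
    and g_int: "integrable p g"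
    and W_C3: "C3 W"
    and Xi_max: "maximal W \<Xi> (convex hull (g ` \<X>))"
    and A_borel: "A \<in> borel_measurable borel"
    and WA_int: "integrable p (\<lambda>x. W (A x))"
    and A_proj: "AE z in distr p borel (\<lambda>x. (A x, x)). fst z \<in> proj_set W \<Xi> (g (snd z))"
    and A_selfcons: "AE z in distr p borel (\<lambda>x. (A x, x)). \<forall>b\<in>Basis.
        real_cond_exp (distr p borel (\<lambda>x. (A x, x)))
          (vimage_algebra (space (distr p borel (\<lambda>x. (A x, x)))) fst borel)
          (\<lambda>z. g (snd z) \<bullet> b) z = fst z \<bullet> b"
  shows "optimal_autoencoder p g W (distr p borel (\<lambda>x. (A x, x)))"
proof -
  interpret P: prob_space p by (rule p_prob)
  obtain D1 :: "'a \<Rightarrow> ('a \<Rightarrow>\<^sub>L real)" and D2 :: "'a \<Rightarrow> ('a \<Rightarrow>\<^sub>L ('a \<Rightarrow>\<^sub>L real))"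
    where hW: "\<And>x. (W has_derivative blinfun_apply (D1 x)) (at x)"
      and hD: "\<And>x. (D1 has_derivative blinfun_apply (D2 x)) (at x)"
    using W_C3 unfolding C3_def by blast
  have contW: "continuous_on UNIV W"
    using hW has_derivative_continuous continuous_at_imp_continuous_on by blast
  have contD: "continuous_on UNIV D1"
    using hD has_derivative_continuous continuous_at_imp_continuous_on by blast
  have Wb[measurable]: "W \<in> borel_measurable borel" by (rule borel_measurable_continuous_onI[OF contW])
  have gb[measurable]: "g \<in> borel_measurable borel" by (rule g_borel)
  have Ab[measurable]: "A \<in> borel_measurable borel" by (rule A_borel)
  have fd: "frechet_derivative W (at a) = blinfun_apply (D1 a)" for a
    using frechet_derivative_at[OF hW] by simp
  define ell where "ell \<xi> y = W \<xi> + D1 \<xi> (y - \<xi>)" for \<xi> y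
  have cost_eq: "cost W a b = W b - ell a b" for a b
    unfolding cost_def fd ell_def by (simp add: blinfun.diff_right)
  define Gr where "Gr a = (\<Sum>b\<in>Basis. D1 a b *\<^sub>R b)" for a
  have grad: "D1 a v = Gr a \<bullet> v" for a v unfolding Gr_def by (rule blin_grad)
  have Grc: "continuous_on UNIV Gr" unfolding Gr_def by (intro continuous_intros contD)
  have Grb[measurable]: "Gr \<in> borel_measurable borel" by (rule borel_measurable_continuous_onI[OF Grc])
  define \<gamma> where "\<gamma> = distr p borel (\<lambda>x. (A x, x))"
  have Tm: "(\<lambda>x. (A x, x)) \<in> measurable p borel" by (rule T_meas[OF p_sets Ab])
  have sb: "snd \<in> borel_measurable (borel :: ('a \<times> 'a) measure)" by (rule snd_meas) simp
  have fb: "fst \<in> borel_measurable (borel :: ('a \<times> 'a) measure)" by (rule fst_meas) simp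
  have gsb: "(\<lambda>z. g (snd z)) \<in> borel_measurable (borel :: ('a \<times> 'a) measure)"
    by (rule measurable_compose[OF sb gb])
  have Wfb: "(\<lambda>z. W (fst z)) \<in> borel_measurable (borel :: ('a \<times> 'a) measure)"
    by (rule measurable_compose[OF fb Wb])
  have aeg: "autoencoder p g \<gamma>"
    unfolding autoencoder_def
  proof (intro conjI)
    show "prob_space \<gamma>" unfolding \<gamma>_def by (rule P.prob_space_distr[OF Tm])
    show "sets \<gamma> = sets borel" unfolding \<gamma>_def by simp
    have "distr \<gamma> borel snd = distr p borel (snd \<circ> (\<lambda>x. (A x, x)))"
      unfolding \<gamma>_def by (rule distr_distr[OF sb Tm])
    also have "\<dots> = distr p borel (\<lambda>x. x)" by (simp add: comp_def)
    also have "\<dots> = p" using p_sets by (intro distr_id2) simp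
    finally show "distr \<gamma> borel snd = p" .
    show "integrable \<gamma> (\<lambda>z. g (snd z))"
      unfolding \<gamma>_def using integrable_distr_eq[OF Tm gsb] g_int by simp
    show "AE z in \<gamma>. \<forall>b\<in>Basis. real_cond_exp \<gamma> (vimage_algebra (space \<gamma>) fst borel) (\<lambda>z. g (snd z) \<bullet> b) z = fst z \<bullet> b"
      unfolding \<gamma>_def by (rule A_selfcons)
  qed
  have Wgi: "integrable \<gamma> (\<lambda>z. W (fst z))"
    unfolding \<gamma>_def using integrable_distr_eq[OF Tm Wfb] WA_int by simp
  have Wgint: "(\<integral>z. W (fst z) \<partial>\<gamma>) = (\<integral>x. W (A x) \<partial>p)"
    unfolding \<gamma>_def using integral_distr[OF Tm Wfb] by simp
  define G where "G = {x \<in> \<X>. A x \<in> proj_set W \<Xi> (g x)}"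
  have AEG: "AE x in p. x \<in> G"
    using p_on_X AE_distrD[OF Tm A_proj] by eventually_elim (auto simp: G_def)
  have Gnz: "G \<noteq> {}"
  proof
    assume "G = {}"
    then have "AE x in p. False" using AEG by simp
    then show False by (simp add: P.AE_False)
  qed
  have Gprop: "A x \<in> \<Xi>" "\<And>\<xi>. \<xi> \<in> \<Xi> \<Longrightarrow> ell \<xi> (g x) \<le> ell (A x) (g x)" if "x \<in> G" for x
    using that unfolding G_def proj_set_def cost_eq by auto
  define S where "S = g ` G"
  have Snz: "S \<noteq> {}" using Gnz unfolding S_def by simp
  have bdd: "bdd_above ((\<lambda>\<xi>. W \<xi> + D1 \<xi> (s - \<xi>)) ` \<Xi>)" if sS: "s \<in> S" for s
  proof -
    obtain x where x: "x \<in> G" "s = g x" using sS unfolding S_def by auto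
    show ?thesis using Gprop(2)[OF x(1)] x(2) unfolding ell_def by (intro bdd_aboveI2) auto
  qed
  have SX: "S \<subseteq> g ` \<X>" unfolding S_def G_def by auto
  have mx: "\<exists>\<xi>\<in>\<Xi>. W \<xi> + D1 \<xi> (y - \<xi>) > W y - e" if y: "y \<in> convex hull S" and e: "e > 0" for y e
  proof -
    have "y \<in> convex hull (g ` \<X>)" using y hull_mono[OF SX] by blast
    then have "(INF a\<in>\<Xi>. ereal (cost W a y)) \<le> 0" using Xi_max unfolding maximal_def by blast
    also have "\<dots> < ereal e" using e by simp
    finally obtain a where "a \<in> \<Xi>" "ereal (cost W a y) < ereal e" by (auto simp: INF_less_iff)
    then have "a \<in> \<Xi>" "W a + D1 a (y - a) > W y - e" unfolding cost_eq ell_def by auto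
    then show ?thesis by blast
  qed
  have Pcl: "\<exists>\<xi>\<in>\<Xi>. ell \<xi> y > W y - e" if "y \<in> closure (convex hull S)" "e > 0" for y e
    unfolding ell_def by (rule closure_max[OF contW Snz bdd mx that])
  have Xinz: "\<Xi> \<noteq> {}" using Gnz Gprop(1) by blast
  obtain T where T: "countable T" "T \<subseteq> \<Xi>" "\<Xi> \<subseteq> closure T" using separable by blast
  have Tnz: "T \<noteq> {}" using T(3) Xinz by auto
  define d where "d = from_nat_into T"
  have rT: "range d = T" unfolding d_def using Tnz T(1) by simp
  have dX: "d n \<in> \<Xi>" for n using rT T(2) by auto
  have cell: "continuous_on UNIV (\<lambda>\<xi>. ell \<xi> y)" for y
    unfolding ell_def by (intro continuous_intros contW contD)
  have Pd: "\<exists>n. ell (d n) y > W y - e" if y: "y \<in> closure (convex hull S)" and e: "e > 0" for y e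
  proof -
    obtain \<xi> where \<xi>: "\<xi> \<in> \<Xi>" "ell \<xi> y > W y - e" using Pcl[OF y e] by blast
    then have "\<xi> \<in> closure T" using T(3) by auto
    then obtain s where s: "\<And>n. s n \<in> T" "s \<longlonglongrightarrow> \<xi>" unfolding closure_sequential by blast
    have "(\<lambda>k. ell (s k) y) \<longlonglongrightarrow> ell \<xi> y"
      by (rule continuous_on_tendsto_compose[OF cell s(2)]) auto
    then have "eventually (\<lambda>k. ell (s k) y > W y - e) sequentially"
      using \<xi>(2) by (rule order_tendstoD(1))
    then obtain k where "ell (s k) y > W y - e" by (auto simp: eventually_sequentially)
    moreover obtain n where "s k = d n" using s(1)[of k] rT by (metis imageE)
    ultimately show ?thesis by auto
  qed
  define c where "c n = W (d n) - D1 (d n) (d n)" for n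
  define V where "V n = Gr (d n)" for n
  have ellcV: "ell (d n) y = c n + V n \<bullet> y" for n y
    unfolding ell_def c_def V_def by (simp add: blinfun.diff_right grad)
  have main: "(\<integral>z. W (fst z) \<partial>M') \<le> (\<integral>x. W (A x) \<partial>p)"
    if ae': "autoencoder p g M'" and Wi': "integrable M' (\<lambda>z. W (fst z))" for M'
  proof -
    have sM': "sets M' = sets borel" and dM': "distr M' borel snd = p"
      using ae' unfolding autoencoder_def by auto
    have "AE x in p. g x \<in> S" using AEG by eventually_elim (auto simp: S_def)
    then have AEcl: "AE z in M'. fst z \<in> closure (convex hull S)" by (rule in_closure[OF ae'])
    have lim: "AE z in M'. \<forall>e>0. \<exists>n. c n + V n \<bullet> fst z > W (fst z) - e"
      using AEcl by eventually_elim (use Pd ellcV in auto)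
    have bd: "(\<integral>z. maxaff c V N (fst z) \<partial>M') \<le> (\<integral>x. W (A x) \<partial>p)" for N
    proof -
      have mg: "(\<lambda>x. maxaff c V N (g x)) \<in> borel_measurable borel" by measurable
      have "(\<integral>z. maxaff c V N (fst z) \<partial>M') \<le> (\<integral>z. maxaff c V N (g (snd z)) \<partial>M')"
        by (rule comp_ineq(3)[OF ae'])
      also have "\<dots> = (\<integral>x. maxaff c V N (g x) \<partial>p)"
        using integral_distr[OF snd_meas[OF sM'] mg] dM' by simp
      also have "\<dots> \<le> (\<integral>x. W (A x) \<partial>p)"
      proof (rule stepC[OF p_prob p_sets gb Ab Grb WA_int _ aeg[unfolded \<gamma>_def]])
        show "integrable p (\<lambda>x. maxaff c V N (g x))"
          using P.finite_measure_axioms g_int by (rule MA_integrable)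
        show "AE x in p. maxaff c V N (g x) \<le> W (A x) + Gr (A x) \<bullet> (g x - A x)"
          using AEG
        proof eventually_elim
          case (elim x)
          have "maxaff c V N (g x) \<le> ell (A x) (g x)"
            using Gprop(2)[OF elim dX] ellcV by (intro MA_le) metis
          then show ?case unfolding ell_def grad .
        qed
      qed
      finally show ?thesis .
    qed
    show ?thesis by (rule stepD[OF ae' Wi' Wb lim bd])
  qed
  show ?thesis
    unfolding optimal_autoencoder_def \<gamma>_def[symmetric]
    using aeg Wgi main Wgint by auto
qed
end
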